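(* In every nonempty $\mathcal{V}$-poset $P$: (i) every non-basic element is comparable to at least one basic element; (ii) the set of basic elements is a maximal antichain; (iii) if an element $x$ is associated to the set of all basic elements of $P$, then the only maximal antichain of $P$ containing $x$ is $\{x\}$.
   Context: All posets are finite. A $\mathcal{V}$-poset is a poset that can be generated from the empty poset by repeatedly applying: (1) disjoint union of $\mathcal{V}$-posets, (2) adding a new greatest element, (3) adding a new least element. An element $x$ is basic if: (B.1) there are no two incomparable elements $u,v$ with $x>u$ and $x>v$; (B.2) there are no two incomparable elements $u,v$ with $x<u$ and $x<v$; (B.3) there is no element $u$ with $u<x$ such that for all $w\neq u,x$ one has ($u\ge w\iff x\ge w$) and ($u\le w\iff x\le w$). An element is associated to a set $B$ of basic elements if it is comparable to every element of $B$ and incomparable to every basic element not in $B$. An antichain is a set of pairwise incomparable elements; a maximal antichain is one not properly contained in another antichain. *)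

theory Defs
  imports Main
begin

text \<open>A finite poset is represented by a carrier set A and its order relation
  R (reflexive, given as a set of pairs, contained in A \<times> A); (x,y) \<in> R means x \<le> y.\<close>

inductive vposet :: "'a set \<Rightarrow> ('a \<times> 'a) set \<Rightarrow> bool" where
  empty: "vposet {} {}"
| union: "vposet A R \<Longrightarrow> vposet B S \<Longrightarrow> A \<inter> B = {} \<Longrightarrow> vposet (A \<union> B) (R \<union> S)"
| top: "vposet A R \<Longrightarrow> t \<notin> A \<Longrightarrow>
          vposet (insert t A) (R \<union> {(y, t) | y. y \<in> insert t A})"
| bot: "vposet A R \<Longrightarrow> b \<notin> A \<Longrightarrow>
          vposet (insert b A) (R \<union> {(b, y) | y. y \<in> insert b A})"

definition pless :: "('a \<times> 'a) set \<Rightarrow> 'a \<Rightarrow> 'a \<Rightarrow> bool" where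
  "pless R x y \<longleftrightarrow> (x, y) \<in> R \<and> x \<noteq> y"

definition comparable :: "('a \<times> 'a) set \<Rightarrow> 'a \<Rightarrow> 'a \<Rightarrow> bool" where
  "comparable R x y \<longleftrightarrow> (x, y) \<in> R \<or> (y, x) \<in> R"

definition basic :: "'a set \<Rightarrow> ('a \<times> 'a) set \<Rightarrow> 'a \<Rightarrow> bool" where
  "basic A R x \<longleftrightarrow> x \<in> A
     \<and> \<not> (\<exists>u\<in>A. \<exists>v\<in>A. \<not> comparable R u v \<and> pless R u x \<and> pless R v x)
     \<and> \<not> (\<exists>u\<in>A. \<exists>v\<in>A. \<not> comparable R u v \<and> pless R x u \<and> pless R x v)
     \<and> \<not> (\<exists>u\<in>A. pless R u x \<and>
            (\<forall>w\<in>A. w \<noteq> u \<and> w \<noteq> x \<longrightarrow>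
               (((w, u) \<in> R \<longleftrightarrow> (w, x) \<in> R) \<and> ((u, w) \<in> R \<longleftrightarrow> (x, w) \<in> R))))"

definition associated :: "'a set \<Rightarrow> ('a \<times> 'a) set \<Rightarrow> 'a \<Rightarrow> 'a set \<Rightarrow> bool" where
  "associated A R x B \<longleftrightarrow> x \<in> A
     \<and> (\<forall>b\<in>B. comparable R x b)
     \<and> (\<forall>b\<in>A. basic A R b \<and> b \<notin> B \<longrightarrow> \<not> comparable R x b)"

definition antichain_in :: "'a set \<Rightarrow> ('a \<times> 'a) set \<Rightarrow> 'a set \<Rightarrow> bool" where
  "antichain_in A R S \<longleftrightarrow> S \<subseteq> A \<and> (\<forall>x\<in>S. \<forall>y\<in>S. x \<noteq> y \<longrightarrow> \<not> comparable R x y)"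

definition maximal_antichain :: "'a set \<Rightarrow> ('a \<times> 'a) set \<Rightarrow> 'a set \<Rightarrow> bool" where
  "maximal_antichain A R S \<longleftrightarrow> antichain_in A R S
     \<and> (\<forall>T. antichain_in A R T \<and> S \<subseteq> T \<longrightarrow> T = S)"

end

theory Submission
  imports Defs
begin


definition po :: "'a set \<Rightarrow> ('a \<times> 'a) set \<Rightarrow> bool" where
  "po A R \<longleftrightarrow> finite A \<and> R \<subseteq> A \<times> A \<and> (\<forall>x\<in>A. (x,x)\<in>R)
     \<and> (\<forall>x y. (x,y)\<in>R \<longrightarrow> (y,x)\<in>R \<longrightarrow> x=y)
     \<and> (\<forall>x y z. (x,y)\<in>R \<longrightarrow> (y,z)\<in>R \<longrightarrow> (x,z)\<in>R)"

lemma vpo: "vposet A R \<Longrightarrow> po A R"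
proof (induction rule: vposet.induct)
  case empty
  then show ?case by (simp add: po_def)
next
  case (union A R B S)
  then show ?case unfolding po_def by blast
next
  case (top A R t)
  then show ?case unfolding po_def by blast
next
  case (bot A R b)
  then show ?case unfolding po_def by blast
qed

lemma union_basic:
  assumes "R \<subseteq> A \<times> A" "S \<subseteq> B \<times> B" "A \<inter> B = {}" "x \<in> A"
  shows "basic (A \<union> B) (R \<union> S) x \<longleftrightarrow> basic A R x"
proof -
  have lt: "\<And>u. pless (R \<union> S) u x \<longleftrightarrow> pless R u x" "\<And>u. pless (R \<union> S) x u \<longleftrightarrow> pless R x u"
    using assms unfolding pless_def by blast+
  have cm: "\<And>u v. u \<in> A \<Longrightarrow> comparable (R \<union> S) u v \<longleftrightarrow> comparable R u v"
    using assms unfolding comparable_def by blast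
  have lA: "\<And>u. pless R u x \<Longrightarrow> u \<in> A" "\<And>u. pless R x u \<Longrightarrow> u \<in> A"
    using assms unfolding pless_def by blast+
  have c1: "(\<exists>u\<in>A \<union> B. \<exists>v\<in>A \<union> B. \<not> comparable (R \<union> S) u v \<and> pless R u x \<and> pless R v x)
      \<longleftrightarrow> (\<exists>u\<in>A. \<exists>v\<in>A. \<not> comparable R u v \<and> pless R u x \<and> pless R v x)"
  proof
    assume "\<exists>u\<in>A \<union> B. \<exists>v\<in>A \<union> B. \<not> comparable (R \<union> S) u v \<and> pless R u x \<and> pless R v x"
    then obtain u v where h: "\<not> comparable (R \<union> S) u v" "pless R u x \<and> pless R v x" by blast
    then have "u \<in> A" "v \<in> A" using lA(1) by auto
    then show "\<exists>u\<in>A. \<exists>v\<in>A. \<not> comparable R u v \<and> pless R u x \<and> pless R v x" using h cm by blast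
  next
    assume "\<exists>u\<in>A. \<exists>v\<in>A. \<not> comparable R u v \<and> pless R u x \<and> pless R v x"
    then obtain u v where h: "u \<in> A" "v \<in> A" "\<not> comparable R u v" "pless R u x \<and> pless R v x" by blast
    then show "\<exists>u\<in>A \<union> B. \<exists>v\<in>A \<union> B. \<not> comparable (R \<union> S) u v \<and> pless R u x \<and> pless R v x" using cm by blast
  qed
  have c2: "(\<exists>u\<in>A \<union> B. \<exists>v\<in>A \<union> B. \<not> comparable (R \<union> S) u v \<and> pless R x u \<and> pless R x v)
      \<longleftrightarrow> (\<exists>u\<in>A. \<exists>v\<in>A. \<not> comparable R u v \<and> pless R x u \<and> pless R x v)"
  proof
    assume "\<exists>u\<in>A \<union> B. \<exists>v\<in>A \<union> B. \<not> comparable (R \<union> S) u v \<and> pless R x u \<and> pless R x v"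
    then obtain u v where h: "\<not> comparable (R \<union> S) u v" "pless R x u \<and> pless R x v" by blast
    then have "u \<in> A" "v \<in> A" using lA(2) by auto
    then show "\<exists>u\<in>A. \<exists>v\<in>A. \<not> comparable R u v \<and> pless R x u \<and> pless R x v" using h cm by blast
  next
    assume "\<exists>u\<in>A. \<exists>v\<in>A. \<not> comparable R u v \<and> pless R x u \<and> pless R x v"
    then obtain u v where h: "u \<in> A" "v \<in> A" "\<not> comparable R u v" "pless R x u \<and> pless R x v" by blast
    then show "\<exists>u\<in>A \<union> B. \<exists>v\<in>A \<union> B. \<not> comparable (R \<union> S) u v \<and> pless R x u \<and> pless R x v" using cm by blast
  qed
  have c3: "(\<forall>w\<in>A \<union> B. w \<noteq> u \<and> w \<noteq> x \<longrightarrow>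
               (((w, u) \<in> R \<union> S \<longleftrightarrow> (w, x) \<in> R \<union> S) \<and> ((u, w) \<in> R \<union> S \<longleftrightarrow> (x, w) \<in> R \<union> S)))
      \<longleftrightarrow> (\<forall>w\<in>A. w \<noteq> u \<and> w \<noteq> x \<longrightarrow>
               (((w, u) \<in> R \<longleftrightarrow> (w, x) \<in> R) \<and> ((u, w) \<in> R \<longleftrightarrow> (x, w) \<in> R)))" if "u \<in> A" for u
  proof -
    have "\<And>w. w \<in> B \<Longrightarrow> (w,u) \<notin> R \<union> S \<and> (u,w) \<notin> R \<union> S \<and> (w,x) \<notin> R \<union> S \<and> (x,w) \<notin> R \<union> S"
      using assms that by blast
    moreover have "\<And>w. w \<in> A \<Longrightarrow> ((w,u) \<in> R \<union> S \<longleftrightarrow> (w,u) \<in> R) \<and> ((u,w) \<in> R \<union> S \<longleftrightarrow> (u,w) \<in> R)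
      \<and> ((w,x) \<in> R \<union> S \<longleftrightarrow> (w,x) \<in> R) \<and> ((x,w) \<in> R \<union> S \<longleftrightarrow> (x,w) \<in> R)"
      using assms that by blast
    note nb = calculation
    have eqA: "\<And>w. w \<in> A \<Longrightarrow> ((w,u) \<in> R \<union> S \<longleftrightarrow> (w,u) \<in> R) \<and> ((u,w) \<in> R \<union> S \<longleftrightarrow> (u,w) \<in> R)
      \<and> ((w,x) \<in> R \<union> S \<longleftrightarrow> (w,x) \<in> R) \<and> ((x,w) \<in> R \<union> S \<longleftrightarrow> (x,w) \<in> R)"
      using assms that by blast
    have nB: "\<And>w. w \<in> B \<Longrightarrow> (w,u) \<notin> R \<union> S \<and> (u,w) \<notin> R \<union> S \<and> (w,x) \<notin> R \<union> S \<and> (x,w) \<notin> R \<union> S"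
      using assms that by blast
    show ?thesis
    proof
      assume H: "\<forall>w\<in>A \<union> B. w \<noteq> u \<and> w \<noteq> x \<longrightarrow>
               (((w, u) \<in> R \<union> S \<longleftrightarrow> (w, x) \<in> R \<union> S) \<and> ((u, w) \<in> R \<union> S \<longleftrightarrow> (x, w) \<in> R \<union> S))"
      show "\<forall>w\<in>A. w \<noteq> u \<and> w \<noteq> x \<longrightarrow>
               (((w, u) \<in> R \<longleftrightarrow> (w, x) \<in> R) \<and> ((u, w) \<in> R \<longleftrightarrow> (x, w) \<in> R))"
      proof (intro ballI impI)
        fix w assume "w \<in> A" "w \<noteq> u \<and> w \<noteq> x"
        then show "((w, u) \<in> R \<longleftrightarrow> (w, x) \<in> R) \<and> ((u, w) \<in> R \<longleftrightarrow> (x, w) \<in> R)"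
        proof -
          have "((w, u) \<in> R \<union> S \<longleftrightarrow> (w, x) \<in> R \<union> S) \<and> ((u, w) \<in> R \<union> S \<longleftrightarrow> (x, w) \<in> R \<union> S)"
            using H \<open>w \<in> A\<close> \<open>w \<noteq> u \<and> w \<noteq> x\<close> by blast
          then show ?thesis using eqA[OF \<open>w \<in> A\<close>] by meson
        qed
      qed
    next
      assume H: "\<forall>w\<in>A. w \<noteq> u \<and> w \<noteq> x \<longrightarrow>
               (((w, u) \<in> R \<longleftrightarrow> (w, x) \<in> R) \<and> ((u, w) \<in> R \<longleftrightarrow> (x, w) \<in> R))"
      show "\<forall>w\<in>A \<union> B. w \<noteq> u \<and> w \<noteq> x \<longrightarrow>
               (((w, u) \<in> R \<union> S \<longleftrightarrow> (w, x) \<in> R \<union> S) \<and> ((u, w) \<in> R \<union> S \<longleftrightarrow> (x, w) \<in> R \<union> S))"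
      proof (intro ballI impI)
        fix w assume wAB: "w \<in> A \<union> B" and "w \<noteq> u \<and> w \<noteq> x"
        from wAB show "((w, u) \<in> R \<union> S \<longleftrightarrow> (w, x) \<in> R \<union> S) \<and> ((u, w) \<in> R \<union> S \<longleftrightarrow> (x, w) \<in> R \<union> S)"
        proof
          assume "w \<in> A"
          then have "((w, u) \<in> R \<longleftrightarrow> (w, x) \<in> R) \<and> ((u, w) \<in> R \<longleftrightarrow> (x, w) \<in> R)"
            using H \<open>w \<noteq> u \<and> w \<noteq> x\<close> by blast
          then show ?thesis using eqA[OF \<open>w \<in> A\<close>] by meson
        next
          assume "w \<in> B" then show ?thesis using nB[of w] by simp
        qed
      qed
    qed
  qed
  have c4: "(\<exists>u\<in>A \<union> B. pless R u x \<and> (\<forall>w\<in>A \<union> B. w \<noteq> u \<and> w \<noteq> x \<longrightarrow>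
               (((w, u) \<in> R \<union> S \<longleftrightarrow> (w, x) \<in> R \<union> S) \<and> ((u, w) \<in> R \<union> S \<longleftrightarrow> (x, w) \<in> R \<union> S))))
     \<longleftrightarrow> (\<exists>u\<in>A. pless R u x \<and> (\<forall>w\<in>A. w \<noteq> u \<and> w \<noteq> x \<longrightarrow>
               (((w, u) \<in> R \<longleftrightarrow> (w, x) \<in> R) \<and> ((u, w) \<in> R \<longleftrightarrow> (x, w) \<in> R))))"
  proof
    assume "\<exists>u\<in>A \<union> B. pless R u x \<and> (\<forall>w\<in>A \<union> B. w \<noteq> u \<and> w \<noteq> x \<longrightarrow>
               (((w, u) \<in> R \<union> S \<longleftrightarrow> (w, x) \<in> R \<union> S) \<and> ((u, w) \<in> R \<union> S \<longleftrightarrow> (x, w) \<in> R \<union> S)))"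
    then obtain u where h: "pless R u x" "(\<forall>w\<in>A \<union> B. w \<noteq> u \<and> w \<noteq> x \<longrightarrow>
               (((w, u) \<in> R \<union> S \<longleftrightarrow> (w, x) \<in> R \<union> S) \<and> ((u, w) \<in> R \<union> S \<longleftrightarrow> (x, w) \<in> R \<union> S)))" by blast
    then have "u \<in> A" using lA(1) by auto
    then show "\<exists>u\<in>A. pless R u x \<and> (\<forall>w\<in>A. w \<noteq> u \<and> w \<noteq> x \<longrightarrow>
               (((w, u) \<in> R \<longleftrightarrow> (w, x) \<in> R) \<and> ((u, w) \<in> R \<longleftrightarrow> (x, w) \<in> R)))" using h c3[of u] by blast
  next
    assume "\<exists>u\<in>A. pless R u x \<and> (\<forall>w\<in>A. w \<noteq> u \<and> w \<noteq> x \<longrightarrow>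
               (((w, u) \<in> R \<longleftrightarrow> (w, x) \<in> R) \<and> ((u, w) \<in> R \<longleftrightarrow> (x, w) \<in> R)))"
    then obtain u where h: "u \<in> A" "pless R u x" "(\<forall>w\<in>A. w \<noteq> u \<and> w \<noteq> x \<longrightarrow>
               (((w, u) \<in> R \<longleftrightarrow> (w, x) \<in> R) \<and> ((u, w) \<in> R \<longleftrightarrow> (x, w) \<in> R)))" by blast
    then show "\<exists>u\<in>A \<union> B. pless R u x \<and> (\<forall>w\<in>A \<union> B. w \<noteq> u \<and> w \<noteq> x \<longrightarrow>
               (((w, u) \<in> R \<union> S \<longleftrightarrow> (w, x) \<in> R \<union> S) \<and> ((u, w) \<in> R \<union> S \<longleftrightarrow> (x, w) \<in> R \<union> S)))" using c3[of u] by blast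
  qed
  show ?thesis
    unfolding basic_def lt c1 c2 c4 using assms(4) by blast
qed

lemma chain_max:
  assumes "finite D" "D \<noteq> {}" "\<forall>x\<in>D. \<forall>y\<in>D. comparable R x y"
    "\<forall>x y z. (x,y)\<in>R \<longrightarrow> (y,z)\<in>R \<longrightarrow> (x,z)\<in>R"
  shows "\<exists>m\<in>D. \<forall>y\<in>D. (y,m)\<in>R"
  using assms
proof (induction D rule: finite_ne_induct)
  case (singleton x)
  then show ?case by (auto simp: comparable_def)
next
  case (insert x F)
  then obtain m where m: "m \<in> F" "\<forall>y\<in>F. (y,m)\<in>R" by auto
  have "comparable R x m" using insert.prems m by auto
  then show ?case
  proof (unfold comparable_def, elim disjE)
    assume "(x,m) \<in> R" then show ?thesis using m by auto
  next
    assume "(m,x) \<in> R" then show ?thesis using m insert.prems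
      by (metis comparable_def insert_iff)
  qed
qed

lemma top_basic:
  assumes P: "po A R" and t: "t \<notin> A" and x: "x \<in> A"
    and R'def: "R' = R \<union> {(y, t) | y. y \<in> insert t A}"
  shows "basic (insert t A) R' x \<longleftrightarrow> basic A R x"
proof -
  have RA: "R \<subseteq> A \<times> A" using P by (simp add: po_def)
  have e1: "\<And>u w. u \<in> A \<Longrightarrow> w \<in> A \<Longrightarrow> (u,w) \<in> R' \<longleftrightarrow> (u,w) \<in> R" using RA t R'def by auto
  have e2: "\<And>w. w \<in> insert t A \<Longrightarrow> (w,t) \<in> R'" using R'def by auto
  have e3: "\<And>w. w \<in> A \<Longrightarrow> (t,w) \<notin> R'" using RA t R'def by auto
  have ltx: "\<And>u. pless R' u x \<longleftrightarrow> pless R u x" using RA t x R'def unfolding pless_def by auto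
  have ltx2: "\<And>u. pless R' x u \<longleftrightarrow> pless R x u \<or> u = t" using RA t x R'def unfolding pless_def by auto
  have lA: "\<And>u. pless R u x \<Longrightarrow> u \<in> A" "\<And>u. pless R x u \<Longrightarrow> u \<in> A"
    using RA unfolding pless_def by blast+
  have cm: "\<And>u v. u \<in> A \<Longrightarrow> v \<in> A \<Longrightarrow> comparable R' u v \<longleftrightarrow> comparable R u v"
    using e1 unfolding comparable_def by blast
  have ct: "\<And>v. v \<in> insert t A \<Longrightarrow> comparable R' t v" "\<And>v. v \<in> insert t A \<Longrightarrow> comparable R' v t"
    using e2 unfolding comparable_def by blast+
  have c1: "(\<exists>u\<in>insert t A. \<exists>v\<in>insert t A. \<not> comparable R' u v \<and> pless R' u x \<and> pless R' v x)
      \<longleftrightarrow> (\<exists>u\<in>A. \<exists>v\<in>A. \<not> comparable R u v \<and> pless R u x \<and> pless R v x)"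
  proof
    assume "\<exists>u\<in>insert t A. \<exists>v\<in>insert t A. \<not> comparable R' u v \<and> pless R' u x \<and> pless R' v x"
    then obtain u v where h: "\<not> comparable R' u v" "pless R u x" "pless R v x" using ltx by blast
    then have "u \<in> A" "v \<in> A" using lA(1) by auto
    then show "\<exists>u\<in>A. \<exists>v\<in>A. \<not> comparable R u v \<and> pless R u x \<and> pless R v x" using h cm by blast
  next
    assume "\<exists>u\<in>A. \<exists>v\<in>A. \<not> comparable R u v \<and> pless R u x \<and> pless R v x"
    then obtain u v where h: "u \<in> A" "v \<in> A" "\<not> comparable R u v" "pless R u x" "pless R v x" by blast
    then show "\<exists>u\<in>insert t A. \<exists>v\<in>insert t A. \<not> comparable R' u v \<and> pless R' u x \<and> pless R' v x"
      using cm ltx by blast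
  qed
  have c2: "(\<exists>u\<in>insert t A. \<exists>v\<in>insert t A. \<not> comparable R' u v \<and> pless R' x u \<and> pless R' x v)
      \<longleftrightarrow> (\<exists>u\<in>A. \<exists>v\<in>A. \<not> comparable R u v \<and> pless R x u \<and> pless R x v)"
  proof
    assume "\<exists>u\<in>insert t A. \<exists>v\<in>insert t A. \<not> comparable R' u v \<and> pless R' x u \<and> pless R' x v"
    then obtain u v where h: "u \<in> insert t A" "v \<in> insert t A" "\<not> comparable R' u v" "pless R' x u" "pless R' x v" by blast
    then have "u \<noteq> t" "v \<noteq> t" using ct by blast+
    then have "pless R x u" "pless R x v" using h ltx2 by blast+
    then have "u \<in> A" "v \<in> A" using lA(2) by auto
    then show "\<exists>u\<in>A. \<exists>v\<in>A. \<not> comparable R u v \<and> pless R x u \<and> pless R x v"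
      using h cm \<open>pless R x u\<close> \<open>pless R x v\<close> by blast
  next
    assume "\<exists>u\<in>A. \<exists>v\<in>A. \<not> comparable R u v \<and> pless R x u \<and> pless R x v"
    then obtain u v where h: "u \<in> A" "v \<in> A" "\<not> comparable R u v" "pless R x u" "pless R x v" by blast
    then show "\<exists>u\<in>insert t A. \<exists>v\<in>insert t A. \<not> comparable R' u v \<and> pless R' x u \<and> pless R' x v"
      using cm ltx2 by blast
  qed
  have c3: "(\<forall>w\<in>insert t A. w \<noteq> u \<and> w \<noteq> x \<longrightarrow>
               (((w, u) \<in> R' \<longleftrightarrow> (w, x) \<in> R') \<and> ((u, w) \<in> R' \<longleftrightarrow> (x, w) \<in> R')))
      \<longleftrightarrow> (\<forall>w\<in>A. w \<noteq> u \<and> w \<noteq> x \<longrightarrow>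
               (((w, u) \<in> R \<longleftrightarrow> (w, x) \<in> R) \<and> ((u, w) \<in> R \<longleftrightarrow> (x, w) \<in> R)))" if u: "u \<in> A" for u
  proof -
    have tt: "((t, u) \<in> R' \<longleftrightarrow> (t, x) \<in> R') \<and> ((u, t) \<in> R' \<longleftrightarrow> (x, t) \<in> R')"
      using e2 e3 u x by blast
    have "\<And>w. w \<in> A \<Longrightarrow> ((w,u) \<in> R' \<longleftrightarrow> (w,u) \<in> R) \<and> ((u,w) \<in> R' \<longleftrightarrow> (u,w) \<in> R)
      \<and> ((w,x) \<in> R' \<longleftrightarrow> (w,x) \<in> R) \<and> ((x,w) \<in> R' \<longleftrightarrow> (x,w) \<in> R)"
      using e1 u x by blast
    then show ?thesis using tt by auto
  qed
  have c4: "(\<exists>u\<in>insert t A. pless R u x \<and> (\<forall>w\<in>insert t A. w \<noteq> u \<and> w \<noteq> x \<longrightarrow>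
               (((w, u) \<in> R' \<longleftrightarrow> (w, x) \<in> R') \<and> ((u, w) \<in> R' \<longleftrightarrow> (x, w) \<in> R'))))
     \<longleftrightarrow> (\<exists>u\<in>A. pless R u x \<and> (\<forall>w\<in>A. w \<noteq> u \<and> w \<noteq> x \<longrightarrow>
               (((w, u) \<in> R \<longleftrightarrow> (w, x) \<in> R) \<and> ((u, w) \<in> R \<longleftrightarrow> (x, w) \<in> R))))"
    using lA(1) c3 by blast
  show ?thesis
    unfolding basic_def c1 c2 unfolding ltx c4 using x by blast
qed

lemma top_t:
  assumes P: "po A R" and t: "t \<notin> A" and ne: "A \<noteq> {}"
    and R'def: "R' = R \<union> {(y, t) | y. y \<in> insert t A}"
  shows "\<not> basic (insert t A) R' t"
proof
  assume B: "basic (insert t A) R' t"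
  have RA: "R \<subseteq> A \<times> A" and fin: "finite A" and tr: "\<forall>x y z. (x,y)\<in>R \<longrightarrow> (y,z)\<in>R \<longrightarrow> (x,z)\<in>R"
    and an: "\<forall>x y. (x,y)\<in>R \<longrightarrow> (y,x)\<in>R \<longrightarrow> x=y"
    using P by (simp_all add: po_def)
  have e1: "\<And>u w. u \<in> A \<Longrightarrow> w \<in> A \<Longrightarrow> (u,w) \<in> R' \<longleftrightarrow> (u,w) \<in> R" using RA t R'def by auto
  have e2: "\<And>w. w \<in> insert t A \<Longrightarrow> (w,t) \<in> R'" using R'def by auto
  have e3: "\<And>w. w \<in> A \<Longrightarrow> (t,w) \<notin> R'" using RA t R'def by auto
  have plt: "\<And>u. u \<in> A \<Longrightarrow> pless R' u t" using e2 t unfolding pless_def by auto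
  show False
  proof (cases "\<forall>u\<in>A. \<forall>v\<in>A. comparable R u v")
    case False
    then obtain u v where "u \<in> A" "v \<in> A" "\<not> comparable R u v" by blast
    then have "\<not> comparable R' u v" using e1 unfolding comparable_def by blast
    then show False using B plt \<open>u \<in> A\<close> \<open>v \<in> A\<close> unfolding basic_def by blast
  next
    case True
    obtain m where m: "m \<in> A" "\<forall>y\<in>A. (y,m)\<in>R" using chain_max[OF fin ne True tr] by blast
    have "\<forall>w\<in>insert t A. w \<noteq> m \<and> w \<noteq> t \<longrightarrow>
               (((w, m) \<in> R' \<longleftrightarrow> (w, t) \<in> R') \<and> ((m, w) \<in> R' \<longleftrightarrow> (t, w) \<in> R'))"
    proof (intro ballI impI)
      fix w assume w: "w \<in> insert t A" "w \<noteq> m \<and> w \<noteq> t"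
      then have wA: "w \<in> A" by blast
      have "(w,m) \<in> R'" using e1 m wA by blast
      moreover have "(m,w) \<notin> R'" using e1 m wA an w by blast
      ultimately show "((w, m) \<in> R' \<longleftrightarrow> (w, t) \<in> R') \<and> ((m, w) \<in> R' \<longleftrightarrow> (t, w) \<in> R')"
        using e2 e3 w wA by blast
    qed
    then show False using B plt m unfolding basic_def by blast
  qed
qed



lemma bot_basic:
  assumes P: "po A R" and t: "b \<notin> A" and x: "x \<in> A"
    and R'def: "R' = R \<union> {(b, y) | y. y \<in> insert b A}"
  shows "basic (insert b A) R' x \<longleftrightarrow> basic A R x \<and> \<not> (\<forall>w\<in>A. (x,w) \<in> R)"
proof -
  have RA: "R \<subseteq> A \<times> A" and an: "\<forall>x y. (x,y)\<in>R \<longrightarrow> (y,x)\<in>R \<longrightarrow> x=y"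
    and rf: "\<forall>x\<in>A. (x,x)\<in>R" using P by (simp_all add: po_def)
  have e1: "\<And>u w. u \<in> A \<Longrightarrow> w \<in> A \<Longrightarrow> (u,w) \<in> R' \<longleftrightarrow> (u,w) \<in> R" using RA t R'def by auto
  have e2: "\<And>w. w \<in> insert b A \<Longrightarrow> (b,w) \<in> R'" using R'def by auto
  have e3: "\<And>w. w \<in> A \<Longrightarrow> (w,b) \<notin> R'" using RA t R'def by auto
  have ltx: "\<And>u. pless R' u x \<longleftrightarrow> pless R u x \<or> u = b" using RA t x R'def unfolding pless_def by auto
  have ltx2: "\<And>u. pless R' x u \<longleftrightarrow> pless R x u" using RA t x R'def unfolding pless_def by auto
  have lA: "\<And>u. pless R u x \<Longrightarrow> u \<in> A" "\<And>u. pless R x u \<Longrightarrow> u \<in> A"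
    using RA unfolding pless_def by blast+
  have cm: "\<And>u v. u \<in> A \<Longrightarrow> v \<in> A \<Longrightarrow> comparable R' u v \<longleftrightarrow> comparable R u v"
    using e1 unfolding comparable_def by blast
  have ct: "\<And>v. v \<in> insert b A \<Longrightarrow> comparable R' b v" "\<And>v. v \<in> insert b A \<Longrightarrow> comparable R' v b"
    using e2 unfolding comparable_def by blast+
  have c1: "(\<exists>u\<in>insert b A. \<exists>v\<in>insert b A. \<not> comparable R' u v \<and> pless R' x u \<and> pless R' x v)
      \<longleftrightarrow> (\<exists>u\<in>A. \<exists>v\<in>A. \<not> comparable R u v \<and> pless R x u \<and> pless R x v)"
  proof
    assume "\<exists>u\<in>insert b A. \<exists>v\<in>insert b A. \<not> comparable R' u v \<and> pless R' x u \<and> pless R' x v"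
    then obtain u v where h: "\<not> comparable R' u v" "pless R x u" "pless R x v" using ltx2 by blast
    then have "u \<in> A" "v \<in> A" using lA(2) by auto
    then show "\<exists>u\<in>A. \<exists>v\<in>A. \<not> comparable R u v \<and> pless R x u \<and> pless R x v" using h cm by blast
  next
    assume "\<exists>u\<in>A. \<exists>v\<in>A. \<not> comparable R u v \<and> pless R x u \<and> pless R x v"
    then obtain u v where h: "u \<in> A" "v \<in> A" "\<not> comparable R u v" "pless R x u" "pless R x v" by blast
    then show "\<exists>u\<in>insert b A. \<exists>v\<in>insert b A. \<not> comparable R' u v \<and> pless R' x u \<and> pless R' x v"
      using cm ltx2 by blast
  qed
  have c2: "(\<exists>u\<in>insert b A. \<exists>v\<in>insert b A. \<not> comparable R' u v \<and> pless R' u x \<and> pless R' v x)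
      \<longleftrightarrow> (\<exists>u\<in>A. \<exists>v\<in>A. \<not> comparable R u v \<and> pless R u x \<and> pless R v x)"
  proof
    assume "\<exists>u\<in>insert b A. \<exists>v\<in>insert b A. \<not> comparable R' u v \<and> pless R' u x \<and> pless R' v x"
    then obtain u v where h: "u \<in> insert b A" "v \<in> insert b A" "\<not> comparable R' u v" "pless R' u x" "pless R' v x" by blast
    then have "u \<noteq> b" "v \<noteq> b" using ct by blast+
    then have "pless R u x" "pless R v x" using h ltx by blast+
    then have "u \<in> A" "v \<in> A" using lA(1) by auto
    then show "\<exists>u\<in>A. \<exists>v\<in>A. \<not> comparable R u v \<and> pless R u x \<and> pless R v x"
      using h cm \<open>pless R u x\<close> \<open>pless R v x\<close> by blast
  next
    assume "\<exists>u\<in>A. \<exists>v\<in>A. \<not> comparable R u v \<and> pless R u x \<and> pless R v x"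
    then obtain u v where h: "u \<in> A" "v \<in> A" "\<not> comparable R u v" "pless R u x" "pless R v x" by blast
    then show "\<exists>u\<in>insert b A. \<exists>v\<in>insert b A. \<not> comparable R' u v \<and> pless R' u x \<and> pless R' v x"
      using cm ltx by blast
  qed
  have c3: "(\<forall>w\<in>insert b A. w \<noteq> u \<and> w \<noteq> x \<longrightarrow>
               (((w, u) \<in> R' \<longleftrightarrow> (w, x) \<in> R') \<and> ((u, w) \<in> R' \<longleftrightarrow> (x, w) \<in> R')))
      \<longleftrightarrow> (\<forall>w\<in>A. w \<noteq> u \<and> w \<noteq> x \<longrightarrow>
               (((w, u) \<in> R \<longleftrightarrow> (w, x) \<in> R) \<and> ((u, w) \<in> R \<longleftrightarrow> (x, w) \<in> R)))" if u: "u \<in> A" for u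
  proof -
    have tt: "((b, u) \<in> R' \<longleftrightarrow> (b, x) \<in> R') \<and> ((u, b) \<in> R' \<longleftrightarrow> (x, b) \<in> R')"
      using e2 e3 u x by blast
    have "\<And>w. w \<in> A \<Longrightarrow> ((w,u) \<in> R' \<longleftrightarrow> (w,u) \<in> R) \<and> ((u,w) \<in> R' \<longleftrightarrow> (u,w) \<in> R)
      \<and> ((w,x) \<in> R' \<longleftrightarrow> (w,x) \<in> R) \<and> ((x,w) \<in> R' \<longleftrightarrow> (x,w) \<in> R)"
      using e1 u x by blast
    then show ?thesis using tt by auto
  qed
  have cb: "(\<forall>w\<in>insert b A. w \<noteq> b \<and> w \<noteq> x \<longrightarrow>
               (((w, b) \<in> R' \<longleftrightarrow> (w, x) \<in> R') \<and> ((b, w) \<in> R' \<longleftrightarrow> (x, w) \<in> R')))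
      \<longleftrightarrow> (\<forall>w\<in>A. (x,w) \<in> R)"
  proof
    assume H: "\<forall>w\<in>insert b A. w \<noteq> b \<and> w \<noteq> x \<longrightarrow>
               (((w, b) \<in> R' \<longleftrightarrow> (w, x) \<in> R') \<and> ((b, w) \<in> R' \<longleftrightarrow> (x, w) \<in> R'))"
    show "\<forall>w\<in>A. (x,w) \<in> R"
    proof
      fix w assume w: "w \<in> A"
      show "(x,w) \<in> R"
      proof (cases "w = x")
        case True then show ?thesis using rf x by blast
      next
        case False
        have wb: "w \<noteq> b" using w t by blast
        have wi: "w \<in> insert b A" using w by simp
        have "((w, b) \<in> R' \<longleftrightarrow> (w, x) \<in> R') \<and> ((b, w) \<in> R' \<longleftrightarrow> (x, w) \<in> R')"
          using bspec[OF H wi] wb False by simp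
        then have "(x,w) \<in> R'" using e2[OF wi] by simp
        then show ?thesis using e1[OF x w] by simp
      qed
    qed
  next
    assume H: "\<forall>w\<in>A. (x,w) \<in> R"
    show "\<forall>w\<in>insert b A. w \<noteq> b \<and> w \<noteq> x \<longrightarrow>
               (((w, b) \<in> R' \<longleftrightarrow> (w, x) \<in> R') \<and> ((b, w) \<in> R' \<longleftrightarrow> (x, w) \<in> R'))"
    proof (intro ballI impI)
      fix w assume w: "w \<in> insert b A" "w \<noteq> b \<and> w \<noteq> x"
      then have wA: "w \<in> A" by simp
      have xw: "(x,w) \<in> R" using H wA by blast
      have "(w,x) \<notin> R" using xw an w by blast
      then have 1: "(w,x) \<notin> R'" using e1[OF wA x] by simp
      have 2: "(x,w) \<in> R'" using e1[OF x wA] xw by simp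
      show "((w, b) \<in> R' \<longleftrightarrow> (w, x) \<in> R') \<and> ((b, w) \<in> R' \<longleftrightarrow> (x, w) \<in> R')"
        using e2[OF w(1)] e3[OF wA] 1 2 by simp
    qed
  qed
  have c4: "(\<exists>u\<in>insert b A. (pless R u x \<or> u = b) \<and> (\<forall>w\<in>insert b A. w \<noteq> u \<and> w \<noteq> x \<longrightarrow>
               (((w, u) \<in> R' \<longleftrightarrow> (w, x) \<in> R') \<and> ((u, w) \<in> R' \<longleftrightarrow> (x, w) \<in> R'))))
     \<longleftrightarrow> (\<exists>u\<in>A. pless R u x \<and> (\<forall>w\<in>A. w \<noteq> u \<and> w \<noteq> x \<longrightarrow>
               (((w, u) \<in> R \<longleftrightarrow> (w, x) \<in> R) \<and> ((u, w) \<in> R \<longleftrightarrow> (x, w) \<in> R)))) \<or> (\<forall>w\<in>A. (x,w) \<in> R)"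
  proof
    assume "\<exists>u\<in>insert b A. (pless R u x \<or> u = b) \<and> (\<forall>w\<in>insert b A. w \<noteq> u \<and> w \<noteq> x \<longrightarrow>
               (((w, u) \<in> R' \<longleftrightarrow> (w, x) \<in> R') \<and> ((u, w) \<in> R' \<longleftrightarrow> (x, w) \<in> R')))"
    then obtain u where u: "u \<in> insert b A" "pless R u x \<or> u = b" "(\<forall>w\<in>insert b A. w \<noteq> u \<and> w \<noteq> x \<longrightarrow>
               (((w, u) \<in> R' \<longleftrightarrow> (w, x) \<in> R') \<and> ((u, w) \<in> R' \<longleftrightarrow> (x, w) \<in> R')))" by blast
    show "(\<exists>u\<in>A. pless R u x \<and> (\<forall>w\<in>A. w \<noteq> u \<and> w \<noteq> x \<longrightarrow>
               (((w, u) \<in> R \<longleftrightarrow> (w, x) \<in> R) \<and> ((u, w) \<in> R \<longleftrightarrow> (x, w) \<in> R)))) \<or> (\<forall>w\<in>A. (x,w) \<in> R)"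
    proof (cases "u = b")
      case True
      then have "(\<forall>w\<in>insert b A. w \<noteq> b \<and> w \<noteq> x \<longrightarrow>
               (((w, b) \<in> R' \<longleftrightarrow> (w, x) \<in> R') \<and> ((b, w) \<in> R' \<longleftrightarrow> (x, w) \<in> R')))" using u(3) by simp
      then show ?thesis using cb by simp
    next
      case False
      then have "pless R u x" using u(2) by simp
      moreover then have "u \<in> A" using lA(1) by simp
      ultimately show ?thesis using u(3) c3 by blast
    qed
  next
    assume "(\<exists>u\<in>A. pless R u x \<and> (\<forall>w\<in>A. w \<noteq> u \<and> w \<noteq> x \<longrightarrow>
               (((w, u) \<in> R \<longleftrightarrow> (w, x) \<in> R) \<and> ((u, w) \<in> R \<longleftrightarrow> (x, w) \<in> R)))) \<or> (\<forall>w\<in>A. (x,w) \<in> R)"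
    then show "\<exists>u\<in>insert b A. (pless R u x \<or> u = b) \<and> (\<forall>w\<in>insert b A. w \<noteq> u \<and> w \<noteq> x \<longrightarrow>
               (((w, u) \<in> R' \<longleftrightarrow> (w, x) \<in> R') \<and> ((u, w) \<in> R' \<longleftrightarrow> (x, w) \<in> R')))"
    proof
      assume "\<exists>u\<in>A. pless R u x \<and> (\<forall>w\<in>A. w \<noteq> u \<and> w \<noteq> x \<longrightarrow>
               (((w, u) \<in> R \<longleftrightarrow> (w, x) \<in> R) \<and> ((u, w) \<in> R \<longleftrightarrow> (x, w) \<in> R)))"
      then obtain u where "u \<in> A" "pless R u x" "(\<forall>w\<in>A. w \<noteq> u \<and> w \<noteq> x \<longrightarrow>
               (((w, u) \<in> R \<longleftrightarrow> (w, x) \<in> R) \<and> ((u, w) \<in> R \<longleftrightarrow> (x, w) \<in> R)))" by blast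
      then show ?thesis using c3 by blast
    next
      assume "\<forall>w\<in>A. (x,w) \<in> R"
      then have "(\<forall>w\<in>insert b A. w \<noteq> b \<and> w \<noteq> x \<longrightarrow>
               (((w, b) \<in> R' \<longleftrightarrow> (w, x) \<in> R') \<and> ((b, w) \<in> R' \<longleftrightarrow> (x, w) \<in> R')))" using cb by simp
      then show ?thesis by blast
    qed
  qed
  show ?thesis
    unfolding basic_def c1 c2 unfolding ltx c4 using x by blast
qed

lemma bot_b:
  assumes P: "po A R" and t: "b \<notin> A"
    and R'def: "R' = R \<union> {(b, y) | y. y \<in> insert b A}"
  shows "basic (insert b A) R' b \<longleftrightarrow> (\<forall>u\<in>A. \<forall>v\<in>A. comparable R u v)"
proof -
  have RA: "R \<subseteq> A \<times> A" using P by (simp_all add: po_def)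
  have e1: "\<And>u w. u \<in> A \<Longrightarrow> w \<in> A \<Longrightarrow> (u,w) \<in> R' \<longleftrightarrow> (u,w) \<in> R" using RA t R'def by auto
  have e2: "\<And>w. w \<in> insert b A \<Longrightarrow> (b,w) \<in> R'" using R'def by auto
  have nl: "\<And>u. \<not> pless R' u b" using RA t R'def unfolding pless_def by auto
  have gt: "\<And>u. pless R' b u \<longleftrightarrow> u \<in> A" using RA t R'def unfolding pless_def by auto
  have cm: "\<And>u v. u \<in> A \<Longrightarrow> v \<in> A \<Longrightarrow> comparable R' u v \<longleftrightarrow> comparable R u v"
    using e1 unfolding comparable_def by blast
  have c2: "(\<exists>u\<in>insert b A. \<exists>v\<in>insert b A. \<not> comparable R' u v \<and> pless R' b u \<and> pless R' b v)
     \<longleftrightarrow> \<not> (\<forall>u\<in>A. \<forall>v\<in>A. comparable R u v)"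
    unfolding gt using cm by blast
  have "basic (insert b A) R' b \<longleftrightarrow> \<not> (\<exists>u\<in>insert b A. \<exists>v\<in>insert b A. \<not> comparable R' u v \<and> pless R' b u \<and> pless R' b v)"
    unfolding basic_def by (simp add: nl)
  then show ?thesis unfolding c2 by (simp only: not_not)
qed

definition I1 :: "'a set \<Rightarrow> ('a \<times> 'a) set \<Rightarrow> bool" where
  "I1 A R \<longleftrightarrow> (\<forall>x\<in>A. \<not> basic A R x \<longrightarrow> (\<exists>b\<in>A. basic A R b \<and> comparable R x b))"
definition AC :: "'a set \<Rightarrow> ('a \<times> 'a) set \<Rightarrow> bool" where
  "AC A R \<longleftrightarrow> antichain_in A R {b \<in> A. basic A R b}"
definition I3 :: "'a set \<Rightarrow> ('a \<times> 'a) set \<Rightarrow> bool" where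
  "I3 A R \<longleftrightarrow> (\<forall>x\<in>A. (\<forall>b\<in>A. basic A R b \<longrightarrow> comparable R x b) \<longrightarrow>
          (\<forall>S. maximal_antichain A R S \<and> x \<in> S \<longrightarrow> S = {x}))"

lemma exists_basic: "A \<noteq> {} \<Longrightarrow> I1 A R \<Longrightarrow> \<exists>b\<in>A. basic A R b"
  unfolding I1_def by (metis ex_in_conv)

lemma comp_all:
  assumes "antichain_in A R S" "x \<in> S" "\<forall>y\<in>A. comparable R x y"
  shows "S = {x}"
proof -
  have "\<forall>y\<in>S. y = x"
  proof
    fix y assume y: "y \<in> S"
    have "y \<in> A" using y assms(1) unfolding antichain_in_def by blast
    then have "comparable R x y" using assms(3) by blast
    moreover have "\<forall>a\<in>S. \<forall>b\<in>S. a \<noteq> b \<longrightarrow> \<not> comparable R a b"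
      using assms(1) unfolding antichain_in_def by (elim conjE)
    ultimately show "y = x" using assms(2) y by metis
  qed
  then show ?thesis using assms(2) by blast
qed

lemma anti_restrict:
  assumes "A \<subseteq> A'" "\<forall>u\<in>A. \<forall>v\<in>A. comparable R' u v \<longleftrightarrow> comparable R u v" "T \<subseteq> A"
  shows "antichain_in A' R' T \<longleftrightarrow> antichain_in A R T"
  using assms unfolding antichain_in_def by blast

lemma chain_basic_min:
  assumes P: "po A R" and ch: "\<forall>u\<in>A. \<forall>v\<in>A. comparable R u v" and x: "x \<in> A" and B: "basic A R x"
  shows "\<forall>w\<in>A. (x,w) \<in> R"
proof (rule ccontr)
  assume "\<not> (\<forall>w\<in>A. (x,w) \<in> R)"
  then obtain w where w: "w \<in> A" "(x,w) \<notin> R" by blast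
  have RA: "R \<subseteq> A \<times> A" and fin: "finite A" and tr: "\<forall>x y z. (x,y)\<in>R \<longrightarrow> (y,z)\<in>R \<longrightarrow> (x,z)\<in>R"
    and an: "\<forall>x y. (x,y)\<in>R \<longrightarrow> (y,x)\<in>R \<longrightarrow> x=y"
    using P by (simp_all add: po_def)
  define D where "D = {u\<in>A. pless R u x}"
  have "w \<in> D" using w ch x unfolding D_def pless_def comparable_def by blast
  then have Dne: "D \<noteq> {}" by blast
  have finD: "finite D" using fin unfolding D_def by simp
  have chD: "\<forall>u\<in>D. \<forall>v\<in>D. comparable R u v" using ch unfolding D_def by blast
  obtain m where m: "m \<in> D" "\<forall>y\<in>D. (y,m)\<in>R" using chain_max[OF finD Dne chD tr] by blast
  have mA: "m \<in> A" and mx: "pless R m x" using m(1) unfolding D_def by auto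
  have "\<forall>w\<in>A. w \<noteq> m \<and> w \<noteq> x \<longrightarrow>
               (((w, m) \<in> R \<longleftrightarrow> (w, x) \<in> R) \<and> ((m, w) \<in> R \<longleftrightarrow> (x, w) \<in> R))"
  proof (intro ballI impI conjI iffI)
    fix w' assume w': "w' \<in> A" "w' \<noteq> m \<and> w' \<noteq> x"
    { assume "(w',m) \<in> R" then show "(w',x) \<in> R" using mx tr unfolding pless_def by blast }
    { assume "(w',x) \<in> R" then have "w' \<in> D" using w' unfolding D_def pless_def by blast
      then show "(w',m) \<in> R" using m by blast }
    { assume "(x,w') \<in> R" then show "(m,w') \<in> R" using mx tr unfolding pless_def by blast }
    { assume mw: "(m,w') \<in> R"
      show "(x,w') \<in> R"
      proof (rule ccontr)
        assume "(x,w') \<notin> R"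
        then have "(w',x) \<in> R" using ch w'(1) x unfolding comparable_def by blast
        then have "w' \<in> D" using w' unfolding D_def pless_def by blast
        then have "(w',m) \<in> R" using m by blast
        then show False using an mw w' by blast
      qed }
  qed
  note H = this
  have nB: "\<not> (\<exists>u\<in>A. pless R u x \<and>
            (\<forall>w\<in>A. w \<noteq> u \<and> w \<noteq> x \<longrightarrow>
               (((w, u) \<in> R \<longleftrightarrow> (w, x) \<in> R) \<and> ((u, w) \<in> R \<longleftrightarrow> (x, w) \<in> R))))"
    using B unfolding basic_def by (elim conjE)
  show False using nB mA mx H by blast
qed

lemma single_ok:
  shows "I1 {e} {(e,e)} \<and> AC {e} {(e,e)} \<and> I3 {e} {(e,e)}"
proof -
  have b: "basic {e} {(e,e)} e" unfolding basic_def pless_def by simp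
  have ac: "\<And>S. S \<subseteq> {e} \<Longrightarrow> antichain_in {e} {(e,e)} S" unfolding antichain_in_def by blast
  show ?thesis unfolding I1_def AC_def I3_def maximal_antichain_def
    using b ac by (auto simp: antichain_in_def)
qed



lemma ext_ok:
  assumes P: "po A R" and e: "e \<notin> A" and ne: "A \<noteq> {}"
    and sub: "R \<subseteq> R'"
    and agree: "\<forall>u\<in>A. \<forall>v\<in>A. comparable R' u v \<longleftrightarrow> comparable R u v"
    and eall: "\<forall>v\<in>insert e A. comparable R' e v"
    and enb: "\<not> basic (insert e A) R' e"
    and bas: "\<forall>x\<in>A. basic (insert e A) R' x \<longleftrightarrow> basic A R x"
    and IH1: "I1 A R" and IH2: "AC A R" and IH3: "I3 A R"
  shows "I1 (insert e A) R' \<and> AC (insert e A) R' \<and> I3 (insert e A) R'"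
proof (intro conjI)
  show "I1 (insert e A) R'"
    unfolding I1_def
  proof (intro ballI impI)
    fix x assume x: "x \<in> insert e A" and nb: "\<not> basic (insert e A) R' x"
    show "\<exists>b\<in>insert e A. basic (insert e A) R' b \<and> comparable R' x b"
    proof (cases "x = e")
      case True
      obtain b where b: "b \<in> A" "basic A R b" using exists_basic[OF ne IH1] by blast
      then show ?thesis using bas eall True by blast
    next
      case False
      then have xA: "x \<in> A" using x by simp
      then have "\<not> basic A R x" using nb bas by blast
      then obtain b where b: "b \<in> A" "basic A R b" "comparable R x b"
        using IH1 xA unfolding I1_def by blast
      then show ?thesis using bas agree xA by blast
    qed
  qed
  have setEq: "{b \<in> insert e A. basic (insert e A) R' b} = {b \<in> A. basic A R b}"
    using bas enb by blast
  show "AC (insert e A) R'"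
    unfolding AC_def setEq
    using anti_restrict[of A "insert e A" R' R "{b \<in> A. basic A R b}"] agree IH2
    unfolding AC_def by blast
  show "I3 (insert e A) R'"
    unfolding I3_def
  proof (intro ballI impI allI)
    fix x S
    assume x: "x \<in> insert e A"
      and H: "\<forall>b\<in>insert e A. basic (insert e A) R' b \<longrightarrow> comparable R' x b"
      and MS: "maximal_antichain (insert e A) R' S \<and> x \<in> S"
    have aS: "antichain_in (insert e A) R' S" and xS: "x \<in> S"
      using MS unfolding maximal_antichain_def by blast+
    show "S = {x}"
    proof (cases "x = e")
      case True
      then show ?thesis using comp_all[OF aS xS] eall by blast
    next
      case False
      then have xA: "x \<in> A" using x by simp
      have H': "\<forall>b\<in>A. basic A R b \<longrightarrow> comparable R x b" using H bas agree xA by blast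
      have "comparable R' e x" using eall xA by blast
      moreover have aS2: "\<forall>a\<in>S. \<forall>b\<in>S. a \<noteq> b \<longrightarrow> \<not> comparable R' a b"
        and aS1: "S \<subseteq> insert e A" using aS unfolding antichain_in_def by simp_all
      ultimately have "e \<notin> S" using xS False by metis
      then have SA: "S \<subseteq> A" using aS1 by blast
      have "maximal_antichain A R S"
        unfolding maximal_antichain_def
      proof (intro conjI allI impI)
        show "antichain_in A R S" using anti_restrict[of A "insert e A" R' R S] agree SA aS by blast
      next
        fix T assume T: "antichain_in A R T \<and> S \<subseteq> T"
        then have "T \<subseteq> A" unfolding antichain_in_def by blast
        then have "antichain_in (insert e A) R' T"
          using anti_restrict[of A "insert e A" R' R T] agree T by blast
        then show "T = S" using MS T unfolding maximal_antichain_def by blast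
      qed
      then show ?thesis using IH3 xA H' xS unfolding I3_def by blast
    qed
  qed
qed

lemma union_ok:
  assumes PA: "po A R" and PB: "po B S" and dis: "A \<inter> B = {}"
    and IHA: "A \<noteq> {} \<longrightarrow> I1 A R \<and> AC A R \<and> I3 A R"
    and IHB: "B \<noteq> {} \<longrightarrow> I1 B S \<and> AC B S \<and> I3 B S"
    and ne: "A \<union> B \<noteq> {}"
  shows "I1 (A \<union> B) (R \<union> S) \<and> AC (A \<union> B) (R \<union> S) \<and> I3 (A \<union> B) (R \<union> S)"
proof -
  have RA: "R \<subseteq> A \<times> A" using PA by (simp add: po_def)
  have SB: "S \<subseteq> B \<times> B" using PB by (simp add: po_def)
  show ?thesis
  proof (cases "A = {}")
    case True
    then have "R = {}" using RA by blast
    then show ?thesis using True IHB ne by simp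
  next
    case Ane: False
    show ?thesis
    proof (cases "B = {}")
      case True
      then have "S = {}" using SB by blast
      then show ?thesis using True IHA Ane by simp
    next
      case Bne: False
      have IA: "I1 A R" "AC A R" "I3 A R" using IHA Ane by blast+
      have IB: "I1 B S" "AC B S" "I3 B S" using IHB Bne by blast+
      have bA: "\<And>x. x \<in> A \<Longrightarrow> basic (A \<union> B) (R \<union> S) x \<longleftrightarrow> basic A R x"
        using union_basic[OF RA SB dis] by blast
      have bB: "\<And>x. x \<in> B \<Longrightarrow> basic (A \<union> B) (R \<union> S) x \<longleftrightarrow> basic B S x"
      proof -
        fix x assume "x \<in> B"
        have "B \<inter> A = {}" using dis by blast
        then have "basic (B \<union> A) (S \<union> R) x \<longleftrightarrow> basic B S x"
          using union_basic[OF SB RA _ \<open>x \<in> B\<close>] by blast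
        then show "basic (A \<union> B) (R \<union> S) x \<longleftrightarrow> basic B S x" by (simp add: Un_commute)
      qed
      have cA: "\<And>u v. u \<in> A \<Longrightarrow> comparable (R \<union> S) u v \<longleftrightarrow> comparable R u v"
        using SB dis unfolding comparable_def by blast
      have cB: "\<And>u v. u \<in> B \<Longrightarrow> comparable (R \<union> S) u v \<longleftrightarrow> comparable S u v"
        using RA dis unfolding comparable_def by blast
      have ncAB: "\<And>u v. u \<in> A \<Longrightarrow> v \<in> B \<Longrightarrow> \<not> comparable (R \<union> S) u v"
        using RA SB dis unfolding comparable_def by blast
      have I1u: "I1 (A \<union> B) (R \<union> S)"
        unfolding I1_def
      proof (intro ballI impI)
        fix x assume x: "x \<in> A \<union> B" and nb: "\<not> basic (A \<union> B) (R \<union> S) x"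
        show "\<exists>b\<in>A \<union> B. basic (A \<union> B) (R \<union> S) b \<and> comparable (R \<union> S) x b"
        proof (cases "x \<in> A")
          case True
          then have "\<not> basic A R x" using nb bA by blast
          then obtain b where b: "b \<in> A" "basic A R b" "comparable R x b"
            using IA(1) True unfolding I1_def by blast
          then show ?thesis using bA cA True by blast
        next
          case False
          then have xB: "x \<in> B" using x by blast
          then have "\<not> basic B S x" using nb bB by blast
          then obtain b where b: "b \<in> B" "basic B S b" "comparable S x b"
            using IB(1) xB unfolding I1_def by blast
          then show ?thesis using bB cB xB by blast
        qed
      qed
      have acA: "\<forall>a\<in>{b \<in> A. basic A R b}. \<forall>c\<in>{b \<in> A. basic A R b}. a \<noteq> c \<longrightarrow> \<not> comparable R a c"
        using IA(2) unfolding AC_def antichain_in_def by simp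
      have acB: "\<forall>a\<in>{b \<in> B. basic B S b}. \<forall>c\<in>{b \<in> B. basic B S b}. a \<noteq> c \<longrightarrow> \<not> comparable S a c"
        using IB(2) unfolding AC_def antichain_in_def by simp
      have ncBA: "\<And>u v. u \<in> B \<Longrightarrow> v \<in> A \<Longrightarrow> \<not> comparable (R \<union> S) u v"
        using ncAB unfolding comparable_def by blast
      have ACu: "AC (A \<union> B) (R \<union> S)"
        unfolding AC_def antichain_in_def
      proof (intro conjI ballI impI)
        show "{b \<in> A \<union> B. basic (A \<union> B) (R \<union> S) b} \<subseteq> A \<union> B" by blast
      next
        fix u v assume u: "u \<in> {b \<in> A \<union> B. basic (A \<union> B) (R \<union> S) b}"
          and v: "v \<in> {b \<in> A \<union> B. basic (A \<union> B) (R \<union> S) b}" and uv: "u \<noteq> v"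
        have uAB: "u \<in> A \<union> B" and ub: "basic (A \<union> B) (R \<union> S) u" using u by simp_all
        have vAB: "v \<in> A \<union> B" and vb: "basic (A \<union> B) (R \<union> S) v" using v by simp_all
        show "\<not> comparable (R \<union> S) u v"
        proof (cases "u \<in> A")
          case uA: True
          show ?thesis
          proof (cases "v \<in> A")
            case True
            have "\<not> comparable R u v" using acA uA True ub vb bA uv by simp
            then show ?thesis using cA uA by simp
          next
            case False
            then show ?thesis using ncAB uA vAB by blast
          qed
        next
          case uB': False
          then have uB: "u \<in> B" using uAB by blast
          show ?thesis
          proof (cases "v \<in> B")
            case True
            have "\<not> comparable S u v" using acB uB True ub vb bB uv by simp
            then show ?thesis using cB uB by simp
          next
            case False
            then show ?thesis using ncBA uB vAB by blast
          qed
        qed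
      qed
      obtain a where a: "a \<in> A" "basic A R a" using exists_basic[OF Ane IA(1)] by blast
      obtain b where b: "b \<in> B" "basic B S b" using exists_basic[OF Bne IB(1)] by blast
      have I3u: "I3 (A \<union> B) (R \<union> S)"
        unfolding I3_def
      proof (intro ballI impI allI)
        fix x T
        assume x: "x \<in> A \<union> B"
          and H: "\<forall>c\<in>A \<union> B. basic (A \<union> B) (R \<union> S) c \<longrightarrow> comparable (R \<union> S) x c"
        have ha: "comparable (R \<union> S) x a" using H a bA by blast
        have hb: "comparable (R \<union> S) x b" using H b bB by blast
        have False
        proof (cases "x \<in> A")
          case True then show False using ncAB b hb by blast
        next
          case False then have "x \<in> B" using x by blast
          then show False using ncBA a ha by blast
        qed
        then show "T = {x}" by blast
      qed
      show ?thesis using I1u ACu I3u by blast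
    qed
  qed
qed

lemma single_R:
  assumes "po {} R" shows "R \<union> {(y, t) | y. y \<in> insert t {}} = {(t,t)}"
    and "R \<union> {(t, y) | y. y \<in> insert t {}} = {(t,t)}"
  using assms unfolding po_def by auto

lemma main_ind: "vposet A R \<Longrightarrow> A \<noteq> {} \<longrightarrow> I1 A R \<and> AC A R \<and> I3 A R"
proof (induction rule: vposet.induct)
  case empty
  then show ?case by simp
next
  case (union A R B S)
  then show ?case using union_ok[OF vpo[OF union(1)] vpo[OF union(2)]] by blast
next
  case (top A R t)
  have P: "po A R" using vpo[OF top(1)] .
  define R' where "R' = R \<union> {(y, t) | y. y \<in> insert t A}"
  show ?case
  proof (cases "A = {}")
    case True
    moreover have "R = {}" using P True by (simp add: po_def)
    ultimately show ?thesis using single_ok[of t] by simp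
  next
    case False
    have RA: "R \<subseteq> A \<times> A" using P by (simp add: po_def)
    have IH: "I1 A R" "AC A R" "I3 A R" using top.IH False by blast+
    have agree: "\<forall>u\<in>A. \<forall>v\<in>A. comparable R' u v \<longleftrightarrow> comparable R u v"
      using top(2) RA unfolding R'_def comparable_def by auto
    have eall: "\<forall>v\<in>insert t A. comparable R' t v"
      unfolding R'_def comparable_def by auto
    have enb: "\<not> basic (insert t A) R' t" using top_t[OF P top(2) False R'_def] .
    have bas: "\<forall>x\<in>A. basic (insert t A) R' x \<longleftrightarrow> basic A R x"
      using top_basic[OF P top(2) _ R'_def] by blast
    have "I1 (insert t A) R' \<and> AC (insert t A) R' \<and> I3 (insert t A) R'"
      using ext_ok[OF P top(2) False _ agree eall enb bas IH] unfolding R'_def by blast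
    then show ?thesis unfolding R'_def by blast
  qed
next
  case (bot A R b)
  have P: "po A R" using vpo[OF bot(1)] .
  define R' where "R' = R \<union> {(b, y) | y. y \<in> insert b A}"
  show ?case
  proof (cases "A = {}")
    case True
    moreover have "R = {}" using P True by (simp add: po_def)
    ultimately show ?thesis using single_ok[of b] by simp
  next
    case False
    have RA: "R \<subseteq> A \<times> A" using P by (simp add: po_def)
    have IH: "I1 A R" "AC A R" "I3 A R" using bot.IH False by blast+
    have agree: "\<forall>u\<in>A. \<forall>v\<in>A. comparable R' u v \<longleftrightarrow> comparable R u v"
      using bot(2) RA unfolding R'_def comparable_def by auto
    have eall: "\<forall>v\<in>insert b A. comparable R' b v"
      unfolding R'_def comparable_def by auto
    have bb: "basic (insert b A) R' b \<longleftrightarrow> (\<forall>u\<in>A. \<forall>v\<in>A. comparable R u v)"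
      using bot_b[OF P bot(2) R'_def] .
    have bx: "\<And>x. x \<in> A \<Longrightarrow> basic (insert b A) R' x \<longleftrightarrow> basic A R x \<and> \<not> (\<forall>w\<in>A. (x,w) \<in> R)"
      using bot_basic[OF P bot(2) _ R'_def] by blast
    have "I1 (insert b A) R' \<and> AC (insert b A) R' \<and> I3 (insert b A) R'"
    proof (cases "\<forall>u\<in>A. \<forall>v\<in>A. comparable R u v")
      case ch: True
      have bB: "basic (insert b A) R' b" using bb ch by simp
      have nx: "\<And>x. x \<in> A \<Longrightarrow> \<not> basic (insert b A) R' x"
        using bx chain_basic_min[OF P ch] by blast
      have allc: "\<And>x. x \<in> insert b A \<Longrightarrow> \<forall>y\<in>insert b A. comparable R' x y"
      proof -
        fix x assume x: "x \<in> insert b A"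
        show "\<forall>y\<in>insert b A. comparable R' x y"
        proof
          fix y assume y: "y \<in> insert b A"
          show "comparable R' x y"
          proof (cases "x = b")
            case True then show ?thesis using eall y by blast
          next
            case False
            then have xA: "x \<in> A" using x by simp
            show ?thesis
            proof (cases "y = b")
              case True then show ?thesis using eall xA unfolding comparable_def by blast
            next
              case False
              then have yA: "y \<in> A" using y by simp
              then show ?thesis using agree ch xA by blast
            qed
          qed
        qed
      qed
      have setb: "{c \<in> insert b A. basic (insert b A) R' c} = {b}" using bB nx by blast
      show ?thesis
      proof (intro conjI)
        show "I1 (insert b A) R' " unfolding I1_def using bB eall
          by (metis comparable_def insertI1)
        show "AC (insert b A) R'" unfolding AC_def setb antichain_in_def by simp
        show "I3 (insert b A) R'" unfolding I3_def
        proof (intro ballI impI allI)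
          fix x S assume x: "x \<in> insert b A" and MS: "maximal_antichain (insert b A) R' S \<and> x \<in> S"
          have aS: "antichain_in (insert b A) R' S" using MS unfolding maximal_antichain_def by simp
          show "S = {x}" using comp_all[OF aS _ allc[OF x]] MS by simp
        qed
      qed
    next
      case nch: False
      have enb: "\<not> basic (insert b A) R' b" using bb nch by simp
      have bas: "\<forall>x\<in>A. basic (insert b A) R' x \<longleftrightarrow> basic A R x"
      proof
        fix x assume xA: "x \<in> A"
        have "basic A R x \<Longrightarrow> \<not> (\<forall>w\<in>A. (x,w) \<in> R)"
        proof
          assume B: "basic A R x" and mn: "\<forall>w\<in>A. (x,w) \<in> R"
          obtain u v where uv: "u \<in> A" "v \<in> A" "\<not> comparable R u v" using nch by blast
          have "x \<noteq> u" using mn uv unfolding comparable_def by blast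
          moreover have "x \<noteq> v" using mn uv unfolding comparable_def by blast
          ultimately have "pless R x u" "pless R x v" using mn uv unfolding pless_def by blast+
          moreover have "\<not> (\<exists>u\<in>A. \<exists>v\<in>A. \<not> comparable R u v \<and> pless R x u \<and> pless R x v)"
            using B unfolding basic_def by (elim conjE)
          ultimately show False using uv by blast
        qed
        then show "basic (insert b A) R' x \<longleftrightarrow> basic A R x" using bx[OF xA] by blast
      qed
      show ?thesis using ext_ok[OF P bot(2) False _ agree eall enb bas IH] unfolding R'_def by blast
    qed
    then show ?thesis unfolding R'_def by blast
  qed
qed

theorem proposition3p12:
  fixes A :: "'a set" and R :: "('a \<times> 'a) set"
  assumes "vposet A R" and "A \<noteq> {}"
  shows "(\<forall>x\<in>A. \<not> basic A R x \<longrightarrow> (\<exists>b\<in>A. basic A R b \<and> comparable R x b))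
    \<and> maximal_antichain A R {b \<in> A. basic A R b}
    \<and> (\<forall>x\<in>A. associated A R x {b \<in> A. basic A R b} \<longrightarrow>
          (\<forall>S. maximal_antichain A R S \<and> x \<in> S \<longrightarrow> S = {x}))"
proof -
  have M: "I1 A R" "AC A R" "I3 A R" using main_ind[OF assms(1)] assms(2) by blast+
  have i: "\<forall>x\<in>A. \<not> basic A R x \<longrightarrow> (\<exists>b\<in>A. basic A R b \<and> comparable R x b)"
    using M(1) unfolding I1_def .
  have ac: "antichain_in A R {b \<in> A. basic A R b}" using M(2) unfolding AC_def .
  have ii: "maximal_antichain A R {b \<in> A. basic A R b}"
    unfolding maximal_antichain_def
  proof (intro conjI allI impI)
    show "antichain_in A R {b \<in> A. basic A R b}" using ac .
  next
    fix T assume T: "antichain_in A R T \<and> {b \<in> A. basic A R b} \<subseteq> T"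
    have TA: "T \<subseteq> A" and aT: "\<forall>x\<in>T. \<forall>y\<in>T. x \<noteq> y \<longrightarrow> \<not> comparable R x y"
      using T unfolding antichain_in_def by simp_all
    have "\<forall>y\<in>T. basic A R y"
    proof
      fix y assume y: "y \<in> T"
      show "basic A R y"
      proof (rule ccontr)
        assume "\<not> basic A R y"
        then obtain c where c: "c \<in> A" "basic A R c" "comparable R y c" using i TA y by blast
        then have "c \<in> T" using T by blast
        moreover have "c \<noteq> y" using c \<open>\<not> basic A R y\<close> by blast
        ultimately show False using aT y c(3) by metis
      qed
    qed
    then show "T = {b \<in> A. basic A R b}" using T TA by blast
  qed
  have iii: "\<forall>x\<in>A. associated A R x {b \<in> A. basic A R b} \<longrightarrow>
          (\<forall>S. maximal_antichain A R S \<and> x \<in> S \<longrightarrow> S = {x})"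
  proof (intro ballI impI)
    fix x assume x: "x \<in> A" and as: "associated A R x {b \<in> A. basic A R b}"
    have "\<forall>b\<in>A. basic A R b \<longrightarrow> comparable R x b" using as unfolding associated_def by blast
    then show "\<forall>S. maximal_antichain A R S \<and> x \<in> S \<longrightarrow> S = {x}"
      using M(3) x unfolding I3_def by blast
  qed
  show ?thesis using i ii iii by blast
qed

end
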